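(* Let $S=\{p_1,\dots,p_n\}$ be a set of $n$ distinct primes and let $f_1,\dots,f_n\in\mathcal{V}$ be nonzero. Then $f_1\otimes\cdots\otimes f_n$ is an eigenfunction of $\mathbf{U}_S$ if and only if each $f_j$ is a simultaneous eigenfunction of all Hecke operators $U_q$, $q\ge2$.
   Context: For a power series $f(x)=\sum_{n\ge0}a_nx^n$ and a positive integer $q$, $U_qf(x)=\sum_{n\ge0}a_{qn}x^n$. For $k\in\mathbb{N}=\{0,1,2,\dots\}$ let $\phi_k(x)=(x\frac{d}{dx})^k\big(\frac{1}{1-x}\big)$, and let $\mathcal{V}$ be the complex span of $\phi_0,\phi_1,\dots$. Let $\mathcal{H}^n=\mathcal{V}\otimes\cdots\otimes\mathcal{V}$ ($n$ factors), where $f_1\otimes\cdots\otimes f_n$ is identified with the function $f_1(x_1)\cdots f_n(x_n)$. The operator $\mathbf{U}_S=U_{p_1}\otimes\cdots\otimes U_{p_n}$ is defined by $\mathbf{U}_S(f_1\otimes\cdots\otimes f_n)(x_1,\dots,x_n)=(U_{p_1}f_1)(x_1)\cdots(U_{p_n}f_n)(x_n)$, extended linearly; $F$ is an eigenfunction of $\mathbf{U}_S$ if $F\neq0$ and $\mathbf{U}_SF=\lambda F$ for some constant $\lambda$. *)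

theory Defs
  imports "HOL-Computational_Algebra.Computational_Algebra"
begin

definition Uq :: "nat \<Rightarrow> complex fps \<Rightarrow> complex fps" where
  "Uq q f = Abs_fps (\<lambda>n. fps_nth f (q * n))"

definition theta :: "complex fps \<Rightarrow> complex fps" where
  "theta f = fps_X * fps_deriv f"

definition phi :: "nat \<Rightarrow> complex fps" where
  "phi k = (theta ^^ k) (inverse (1 - fps_X))"

definition V :: "complex fps set" where
  "V = {g. \<exists>(c :: nat \<Rightarrow> complex) N. g = (\<Sum>k<N. fps_const (c k) * phi k)}"

definition hecke_eigen :: "complex fps \<Rightarrow> bool" where
  "hecke_eigen f \<longleftrightarrow> f \<noteq> 0 \<and> (\<forall>q\<ge>2. \<exists>\<mu>. Uq q f = fps_const \<mu> * f)"

text \<open>Functions of n variables x_0..x_{n-1} as multivariate coefficient families,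
  indexed by exponent vectors m :: nat => nat (only m j for j < n is relevant).\<close>
definition tensor :: "nat \<Rightarrow> (nat \<Rightarrow> complex fps) \<Rightarrow> ((nat \<Rightarrow> nat) \<Rightarrow> complex)" where
  "tensor n f = (\<lambda>m. \<Prod>j<n. fps_nth (f j) (m j))"

definition US :: "(nat \<Rightarrow> nat) \<Rightarrow> ((nat \<Rightarrow> nat) \<Rightarrow> complex) \<Rightarrow> ((nat \<Rightarrow> nat) \<Rightarrow> complex)" where
  "US p F = (\<lambda>m. F (\<lambda>j. p j * m j))"

definition eigenfunction :: "(nat \<Rightarrow> nat) \<Rightarrow> ((nat \<Rightarrow> nat) \<Rightarrow> complex) \<Rightarrow> bool" where
  "eigenfunction p F \<longleftrightarrow> F \<noteq> (\<lambda>_. 0) \<and> (\<exists>c. US p F = (\<lambda>m. c * F m))"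

end

theory Submission
  imports Defs
begin

lemma inv_gp: "inverse (1 - fps_X :: complex fps) = Abs_fps (\<lambda>n. 1)"
proof -
  have "inverse (inverse (Abs_fps (\<lambda>n. 1::complex))) = Abs_fps (\<lambda>n. 1)"
    by (rule fps_inverse_idempotent) simp
  thus ?thesis by (simp add: fps_inverse_gp')
qed

lemma theta_nth: "theta g $ n = of_nat n * g $ n"
  unfolding theta_def by (cases n) auto

lemma phi_nth: "phi k $ n = of_nat n ^ k"
  by (induction k) (simp_all add: phi_def inv_gp theta_nth)

lemma V_poly:
  assumes "g \<in> V" shows "\<exists>P. \<forall>m. g $ m = poly P (of_nat m)"
proof -
  obtain c N where g: "g = (\<Sum>k<N. fps_const (c k) * phi k)" using assms unfolding V_def by blast
  show ?thesis
  proof (intro exI allI)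
    fix m
    show "g $ m = poly (\<Sum>k<N. monom (c k) k) (of_nat m)"
      by (simp add: g fps_sum_nth phi_nth poly_sum poly_monom)
  qed
qed

lemma exists_nonroot:
  fixes P :: "complex poly"
  assumes "P \<noteq> 0" "q > 0" shows "\<exists>t::nat. poly P (of_nat (q*t)) \<noteq> 0"
proof (rule ccontr)
  assume "\<not> ?thesis"
  hence "range (\<lambda>t. of_nat (q*t) :: complex) \<subseteq> {x. poly P x = 0}" by auto
  moreover have "inj (\<lambda>t. of_nat (q*t) :: complex)" using assms(2) by (auto simp: inj_def)
  hence "infinite (range (\<lambda>t. of_nat (q*t) :: complex))" using finite_imageD by blast
  ultimately show False using poly_roots_finite[OF assms(1)] finite_subset by blast
qed

lemma eig_monom:
  fixes P :: "complex poly"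
  assumes "P \<noteq> 0" "q \<ge> 2" "\<forall>m::nat. poly P (of_nat (q*m)) = \<mu> * poly P (of_nat m)"
  shows "\<exists>a k. P = monom a k"
proof -
  define Q where "Q = pcompose P [:0, of_nat q:] - smult \<mu> P"
  have "\<forall>m::nat. poly Q (of_nat m) = 0"
    using assms(3) by (simp add: Q_def poly_pcompose mult.commute)
  have Q0: "Q = 0"
  proof (rule ccontr)
    assume "Q \<noteq> 0"
    hence "finite {x. poly Q x = 0}" by (rule poly_roots_finite)
    moreover have "range (of_nat :: nat \<Rightarrow> complex) \<subseteq> {x. poly Q x = 0}"
      using \<open>\<forall>m::nat. poly Q (of_nat m) = 0\<close> by auto
    moreover have "infinite (range (of_nat :: nat \<Rightarrow> complex))"
      using finite_imageD inj_of_nat by blast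
    ultimately show False using finite_subset by blast
  qed
  have cf: "\<And>i. (of_nat q ^ i - \<mu>) * coeff P i = 0"
  proof -
    fix i
    have "coeff Q i = 0" using Q0 by simp
    thus "(of_nat q ^ i - \<mu>) * coeff P i = 0"
      by (simp add: Q_def coeff_pcompose_linear algebra_simps)
  qed
  obtain k where k: "coeff P k \<noteq> 0" using assms(1) by (meson leading_coeff_neq_0)
  have "\<forall>i. i \<noteq> k \<longrightarrow> coeff P i = 0"
  proof (intro allI impI)
    fix i assume "i \<noteq> k"
    have mu: "\<mu> = of_nat q ^ k" using cf[of k] k by simp
    have "(of_nat q ^ i :: complex) \<noteq> of_nat q ^ k"
    proof
      assume "(of_nat q ^ i :: complex) = of_nat q ^ k"
      hence "q ^ i = q ^ k" by (metis of_nat_eq_iff of_nat_power)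
      thus False using \<open>i \<noteq> k\<close> assms(2) by (simp add: power_inject_exp)
    qed
    thus "coeff P i = 0" using cf[of i] mu by simp
  qed
  hence "P = monom (coeff P k) k"
    by (intro poly_eqI) (auto simp: coeff_monom)
  thus ?thesis by blast
qed

lemma monom_hecke:
  assumes "g \<noteq> 0" "\<forall>m. g $ m = poly (monom a k) (of_nat m)"
  shows "hecke_eigen g"
  unfolding hecke_eigen_def
proof (intro conjI allI impI)
  fix r :: nat
  show "\<exists>\<mu>. Uq r g = fps_const \<mu> * g"
    by (rule exI[of _ "of_nat r ^ k"])
       (simp add: Uq_def fps_eq_iff assms(2) poly_monom power_mult_distrib)
qed (fact assms(1))


theorem mainTheorem17:
  fixes n :: nat and p :: "nat \<Rightarrow> nat" and f :: "nat \<Rightarrow> complex fps"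
  assumes "\<forall>j<n. prime (p j)"
    and "inj_on p {..<n}"
    and "\<forall>j<n. f j \<in> V \<and> f j \<noteq> 0"
  shows "eigenfunction p (tensor n f) \<longleftrightarrow> (\<forall>j<n. hecke_eigen (f j))"
proof
  assume H: "\<forall>j<n. hecke_eigen (f j)"
  have p2: "\<And>j. j < n \<Longrightarrow> p j \<ge> 2" using assms(1) prime_ge_2_nat by blast
  have "\<forall>j. \<exists>\<mu>. j < n \<longrightarrow> Uq (p j) (f j) = fps_const \<mu> * f j"
    using H p2 unfolding hecke_eigen_def by blast
  then obtain mu where mu: "\<And>j. j < n \<Longrightarrow> Uq (p j) (f j) = fps_const (mu j) * f j" by metis
  have mun: "\<And>j x. j < n \<Longrightarrow> f j $ (p j * x) = mu j * f j $ x"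
  proof -
    fix j x assume "j < n"
    have "Uq (p j) (f j) $ x = (fps_const (mu j) * f j) $ x" using mu[OF \<open>j < n\<close>] by simp
    thus "f j $ (p j * x) = mu j * f j $ x" by (simp add: Uq_def)
  qed
  have "\<forall>j. \<exists>t. j < n \<longrightarrow> f j $ t \<noteq> 0" using assms(3) fps_nonzero_nth by blast
  then obtain t where t: "\<And>j. j < n \<Longrightarrow> f j $ t j \<noteq> 0" by metis
  have "tensor n f t \<noteq> 0" unfolding tensor_def using t by simp
  hence ne: "tensor n f \<noteq> (\<lambda>_. 0)" by auto
  have "US p (tensor n f) = (\<lambda>m. (\<Prod>j<n. mu j) * tensor n f m)"
    by (rule ext) (simp add: US_def tensor_def mun prod.distrib)
  thus "eigenfunction p (tensor n f)" unfolding eigenfunction_def using ne by blast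
next
  assume E: "eigenfunction p (tensor n f)"
  then obtain c where c: "US p (tensor n f) = (\<lambda>m. c * tensor n f m)"
    unfolding eigenfunction_def by blast
  have ceq: "\<And>m. (\<Prod>j<n. f j $ (p j * m j)) = c * (\<Prod>j<n. f j $ m j)"
  proof -
    fix m show "(\<Prod>j<n. f j $ (p j * m j)) = c * (\<Prod>j<n. f j $ m j)"
      using fun_cong[OF c, of m] by (simp add: US_def tensor_def)
  qed
  have p2: "\<And>j. j < n \<Longrightarrow> p j \<ge> 2" using assms(1) prime_ge_2_nat by blast
  have "\<forall>j. \<exists>P. j < n \<longrightarrow> (\<forall>m. f j $ m = poly P (of_nat m))"
    using assms(3) V_poly by blast
  then obtain P where P: "\<And>j m. j < n \<Longrightarrow> f j $ m = poly (P j) (of_nat m)" by metis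
  have Pnz: "\<And>j. j < n \<Longrightarrow> P j \<noteq> 0"
  proof
    fix j assume "j < n" "P j = 0"
    hence "f j = 0" using P[OF \<open>j < n\<close>] by (simp add: fps_eq_iff)
    thus False using assms(3) \<open>j < n\<close> by blast
  qed
  have "\<forall>j. \<exists>t. j < n \<longrightarrow> poly (P j) (of_nat (p j * t)) \<noteq> 0"
    using exists_nonroot Pnz p2 by (metis not_numeral_le_zero not_gr_zero)
  then obtain t where t: "\<And>j. j < n \<Longrightarrow> f j $ (p j * t j) \<noteq> 0"
    using P by metis
  have A: "(\<Prod>j<n. f j $ (p j * t j)) \<noteq> 0" using t by simp
  show "\<forall>j<n. hecke_eigen (f j)"
  proof (intro allI impI)
    fix j assume j: "j < n"
    define A' where "A' = (\<Prod>i\<in>{..<n}-{j}. f i $ (p i * t i))"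
    define B' where "B' = (\<Prod>i\<in>{..<n}-{j}. f i $ t i)"
    have Asplit: "(\<Prod>i<n. g i) = g j * (\<Prod>i\<in>{..<n}-{j}. g i)" for g :: "nat \<Rightarrow> complex"
      using j by (simp add: prod.remove)
    have A'nz: "A' \<noteq> 0" using A Asplit[of "\<lambda>i. f i $ (p i * t i)"] unfolding A'_def by simp
    have key: "f j $ (p j * x) = (c * B' / A') * f j $ x" for x
    proof -
      define m where "m = t(j := x)"
      have e1: "(\<Prod>i\<in>{..<n}-{j}. f i $ (p i * m i)) = A'"
        unfolding A'_def m_def by (rule prod.cong) auto
      have e2: "(\<Prod>i\<in>{..<n}-{j}. f i $ m i) = B'"
        unfolding B'_def m_def by (rule prod.cong) auto
      have "f j $ (p j * x) * A' = c * (f j $ x * B')"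
        using ceq[of m] Asplit[of "\<lambda>i. f i $ (p i * m i)"] Asplit[of "\<lambda>i. f i $ m i"] e1 e2
        by (simp add: m_def)
      thus ?thesis using A'nz by (simp add: field_simps)
    qed
    have "\<forall>m::nat. poly (P j) (of_nat (p j * m)) = (c * B' / A') * poly (P j) (of_nat m)"
      using key P[OF j] by metis
    then obtain a k where "P j = monom a k" using eig_monom Pnz[OF j] p2[OF j] by blast
    thus "hecke_eigen (f j)" using monom_hecke assms(3) j P[OF j] by metis
  qed
qed

end
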